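(* For every graph $G$, the map $\Phi:B(G)\to B_0(K_2\times G)$, $(\sigma,\tau)\mapsto\{\sigma\times\{1\},\tau\times\{2\}\}$ (identifying $\sigma\times\{1\}$ with $\{(1,x):x\in\sigma\}$ etc.) is a natural isomorphism of $\mathbb{Z}_2$-posets, where $B_0(K_2\times G)$ carries the involution induced by the involution $(1,x)\leftrightarrow(2,x)$ of $K_2\times G$.
   Context: A graph $G$ is a set $V(G)$ with a symmetric subset $E(G)\subset V(G)\times V(G)$ (loops allowed). $K_2\times G$ has vertex set $\{1,2\}\times V(G)$, $((i,x),(j,y))$ an edge iff $i\neq j$ and $(x,y)\in E(G)$. The box complex $B(G)$ is the poset of pairs $(\sigma,\tau)$ of non-empty subsets of $V(G)$ with $\sigma\times\tau\subset E(G)$, ordered by componentwise inclusion, with involution $(\sigma,\tau)\leftrightarrow(\tau,\sigma)$. For a bipartite graph $X$ (one admitting a homomorphism to $K_2$), $B_0(X)$ is the poset whose elements are the unordered pairs $\{\sigma,\tau\}$ of non-empty subsets of $V(X)$ with $\sigma\times\tau\subset E(X)$, with $\alpha\le\beta$ iff for each $\sigma\in\alpha$ there is $\tau\in\beta$ with $\sigma\subset\tau$. An involution $t$ of $X$ (graph automorphism with $t^2=\mathrm{id}$) acts on $B_0(X)$ by $\{\sigma,\tau\}\mapsto\{t(\sigma),t(\tau)\}$. *)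

theory Defs
  imports Main
begin

text \<open>A graph: vertex set V with a symmetric edge relation E on V (loops allowed).\<close>
definition graph :: "'a set \<Rightarrow> ('a \<times> 'a) set \<Rightarrow> bool" where
  "graph V E \<longleftrightarrow> E \<subseteq> V \<times> V \<and> sym E"

definition graph_hom :: "'a set \<Rightarrow> ('a \<times> 'a) set \<Rightarrow> 'b set \<Rightarrow> ('b \<times> 'b) set \<Rightarrow> ('a \<Rightarrow> 'b) \<Rightarrow> bool" where
  "graph_hom V E W F f \<longleftrightarrow> f ` V \<subseteq> W \<and> (\<forall>x y. (x, y) \<in> E \<longrightarrow> (f x, f y) \<in> F)"

definition box_complex :: "'a set \<Rightarrow> ('a \<times> 'a) set \<Rightarrow> ('a set \<times> 'a set) set" where
  "box_complex V E = {(\<sigma>, \<tau>). \<sigma> \<noteq> {} \<and> \<tau> \<noteq> {} \<and> \<sigma> \<subseteq> V \<and> \<tau> \<subseteq> V \<and> \<sigma> \<times> \<tau> \<subseteq> E}"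

definition box_le :: "'a set \<times> 'a set \<Rightarrow> 'a set \<times> 'a set \<Rightarrow> bool" where
  "box_le p q \<longleftrightarrow> fst p \<subseteq> fst q \<and> snd p \<subseteq> snd q"

definition box_inv :: "'a set \<times> 'a set \<Rightarrow> 'a set \<times> 'a set" where
  "box_inv p = (snd p, fst p)"

definition box_map :: "('a \<Rightarrow> 'b) \<Rightarrow> 'a set \<times> 'a set \<Rightarrow> 'b set \<times> 'b set" where
  "box_map f p = (f ` fst p, f ` snd p)"

definition K2_verts :: "'a set \<Rightarrow> (nat \<times> 'a) set" where
  "K2_verts V = {1, 2} \<times> V"

definition K2_edges :: "('a \<times> 'a) set \<Rightarrow> ((nat \<times> 'a) \<times> (nat \<times> 'a)) set" where
  "K2_edges E = {((i, x), (j, y)). i \<in> {1, 2} \<and> j \<in> {1, 2} \<and> i \<noteq> j \<and> (x, y) \<in> E}"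

definition K2_flip :: "nat \<times> 'a \<Rightarrow> nat \<times> 'a" where
  "K2_flip v = (if fst v = 1 then 2 else 1, snd v)"

definition K2_map :: "('a \<Rightarrow> 'b) \<Rightarrow> nat \<times> 'a \<Rightarrow> nat \<times> 'b" where
  "K2_map f v = (fst v, f (snd v))"

definition B0 :: "'b set \<Rightarrow> ('b \<times> 'b) set \<Rightarrow> 'b set set set" where
  "B0 V E = {\<alpha>. \<exists>\<sigma> \<tau>. \<alpha> = {\<sigma>, \<tau>} \<and> \<sigma> \<noteq> {} \<and> \<tau> \<noteq> {} \<and> \<sigma> \<subseteq> V \<and> \<tau> \<subseteq> V \<and> \<sigma> \<times> \<tau> \<subseteq> E}"

definition B0_le :: "'b set set \<Rightarrow> 'b set set \<Rightarrow> bool" where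
  "B0_le \<alpha> \<beta> \<longleftrightarrow> (\<forall>\<sigma>\<in>\<alpha>. \<exists>\<tau>\<in>\<beta>. \<sigma> \<subseteq> \<tau>)"

definition B0_map :: "('b \<Rightarrow> 'c) \<Rightarrow> 'b set set \<Rightarrow> 'c set set" where
  "B0_map t \<alpha> = (\<lambda>\<sigma>. t ` \<sigma>) ` \<alpha>"

definition Phi :: "'a set \<times> 'a set \<Rightarrow> (nat \<times> 'a) set set" where
  "Phi p = {(\<lambda>x. (1::nat, x)) ` fst p, (\<lambda>x. (2::nat, x)) ` snd p}"

end

theory Submission
  imports Defs
begin

lemma img_ne: "A \<noteq> {} \<Longrightarrow> B \<noteq> {} \<Longrightarrow> (\<lambda>x. (1::nat, x)) ` A \<noteq> (\<lambda>x. (2::nat, x)) ` B"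
proof
  assume h: "(\<lambda>x. (1::nat, x)) ` A = (\<lambda>x. (2::nat, x)) ` B"
  assume "A \<noteq> {}" then obtain a where "a \<in> A" by blast
  then have "(1::nat, a) \<in> (\<lambda>x. (2::nat, x)) ` B" using h by blast
  then show False by auto
qed

lemma Phi_eq_iff:
  assumes "fst p \<noteq> {}" "snd p \<noteq> {}" "fst q \<noteq> {}" "snd q \<noteq> {}"
  shows "Phi p = Phi q \<longleftrightarrow> p = q"
proof
  assume h: "Phi p = Phi q"
  have n: "(\<lambda>x. (1::nat, x)) ` fst p \<noteq> (\<lambda>x. (2::nat, x)) ` snd q"
    by (rule img_ne[OF assms(1) assms(4)])
  have a: "(\<lambda>x. (1::nat, x)) ` fst p = (\<lambda>x. (1::nat, x)) ` fst q"
     and b: "(\<lambda>x. (2::nat, x)) ` snd p = (\<lambda>x. (2::nat, x)) ` snd q"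
    using h n unfolding Phi_def doubleton_eq_iff by blast+
  have i1: "inj (\<lambda>x. (1::nat, x))" and i2: "inj (\<lambda>x. (2::nat, x))" by (auto intro: injI)
  have "fst p = fst q" using a i1 by (metis inj_image_eq_iff)
  moreover have "snd p = snd q" using b i2 by (metis inj_image_eq_iff)
  ultimately show "p = q" by (simp add: prod_eq_iff)
qed simp

lemma surj_part:
  assumes g: "graph V E" and "\<alpha> \<in> B0 (K2_verts V) (K2_edges E)"
  shows "\<alpha> \<in> Phi ` box_complex V E"
proof -
  obtain \<sigma> \<tau> where al: "\<alpha> = {\<sigma>, \<tau>}" and ne: "\<sigma> \<noteq> {}" "\<tau> \<noteq> {}"
    and sub: "\<sigma> \<subseteq> K2_verts V" "\<tau> \<subseteq> K2_verts V" and ed: "\<sigma> \<times> \<tau> \<subseteq> K2_edges E"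
    using assms(2) unfolding B0_def by blast
  obtain s where s: "s \<in> \<sigma>" using ne by blast
  obtain t where t: "t \<in> \<tau>" using ne by blast
  have lay: "\<And>u v. u \<in> \<sigma> \<Longrightarrow> v \<in> \<tau> \<Longrightarrow> fst u \<in> {1,2} \<and> fst v \<in> {1,2} \<and> fst u \<noteq> fst v \<and> (snd u, snd v) \<in> E"
    using ed unfolding K2_edges_def by fastforce
  have sl: "\<And>u. u \<in> \<sigma> \<Longrightarrow> fst u = fst s"
    using lay[OF _ t] lay[OF s t] by force
  have tl: "\<And>v. v \<in> \<tau> \<Longrightarrow> fst v = fst t"
    using lay[OF s] lay[OF s t] by force
  have main: "\<And>A B. A \<noteq> {} \<Longrightarrow> B \<noteq> {} \<Longrightarrow> A \<subseteq> K2_verts V \<Longrightarrow> B \<subseteq> K2_verts V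
     \<Longrightarrow> (\<forall>u\<in>A. fst u = 1) \<Longrightarrow> (\<forall>v\<in>B. fst v = 2) \<Longrightarrow> (\<forall>u\<in>A. \<forall>v\<in>B. (snd u, snd v) \<in> E)
     \<Longrightarrow> {A, B} \<in> Phi ` box_complex V E"
  proof -
    fix A B :: "(nat \<times> 'a) set"
    assume h: "A \<noteq> {}" "B \<noteq> {}" "A \<subseteq> K2_verts V" "B \<subseteq> K2_verts V"
      "\<forall>u\<in>A. fst u = 1" "\<forall>v\<in>B. fst v = 2" "\<forall>u\<in>A. \<forall>v\<in>B. (snd u, snd v) \<in> E"
    have eA: "(\<lambda>x. (1::nat, x)) ` (snd ` A) = A"
      using h(5) by (force simp: image_iff)
    have eB: "(\<lambda>x. (2::nat, x)) ` (snd ` B) = B"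
      using h(6) by (force simp: image_iff)
    have "(snd ` A, snd ` B) \<in> box_complex V E"
      using h unfolding box_complex_def K2_verts_def by auto
    moreover have "Phi (snd ` A, snd ` B) = {A, B}"
      unfolding Phi_def using eA eB by simp
    ultimately show "{A, B} \<in> Phi ` box_complex V E" by (metis image_eqI)
  qed
  show ?thesis
  proof (cases "fst s = 1")
    case True
    then have t2: "fst t = 2" using lay[OF s t] by auto
    have c1: "\<forall>u\<in>\<sigma>. fst u = 1" using sl True by simp
    have c2: "\<forall>v\<in>\<tau>. fst v = 2" using tl t2 by simp
    have c3: "\<forall>u\<in>\<sigma>. \<forall>v\<in>\<tau>. (snd u, snd v) \<in> E" using lay by blast
    show ?thesis unfolding al using main[OF ne sub c1 c2 c3] .
  next
    case False
    then have s2: "fst s = 2" and t1: "fst t = 1" using lay[OF s t] by auto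
    have c1: "\<forall>u\<in>\<tau>. fst u = 1" using tl t1 by simp
    have c2: "\<forall>v\<in>\<sigma>. fst v = 2" using sl s2 by simp
    have c3: "\<forall>u\<in>\<tau>. \<forall>v\<in>\<sigma>. (snd u, snd v) \<in> E"
    proof (intro ballI)
      fix u v assume "u \<in> \<tau>" "v \<in> \<sigma>"
      then have "(snd v, snd u) \<in> E" using lay by blast
      then show "(snd u, snd v) \<in> E" using g unfolding graph_def by (meson symD)
    qed
    have "{\<tau>, \<sigma>} \<in> Phi ` box_complex V E" using main[OF ne(2) ne(1) sub(2) sub(1) c1 c2 c3] .
    moreover have "{\<sigma>, \<tau>} = {\<tau>, \<sigma>}" by blast
    ultimately show ?thesis unfolding al by simp
  qed
qed

theorem proposition4p2:
  fixes V :: "'a set" and E :: "('a \<times> 'a) set"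
  assumes "graph V E"
  shows "bij_betw Phi (box_complex V E) (B0 (K2_verts V) (K2_edges E))
    \<and> (\<forall>p\<in>box_complex V E. \<forall>q\<in>box_complex V E. box_le p q \<longleftrightarrow> B0_le (Phi p) (Phi q))
    \<and> (\<forall>p\<in>box_complex V E. Phi (box_inv p) = B0_map K2_flip (Phi p))
    \<and> (\<forall>(W :: 'b set) F f. graph W F \<and> graph_hom V E W F f \<longrightarrow>
         (\<forall>p\<in>box_complex V E. Phi (box_map f p) = B0_map (K2_map f) (Phi p)))"
proof -
  have inj: "inj_on Phi (box_complex V E)"
  proof (rule inj_onI)
    fix p q assume "p \<in> box_complex V E" "q \<in> box_complex V E" "Phi p = Phi q"
    then show "p = q" using Phi_eq_iff[of p q] unfolding box_complex_def by (auto split: prod.splits)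
  qed
  have into: "Phi p \<in> B0 (K2_verts V) (K2_edges E)" if "p \<in> box_complex V E" for p
  proof -
    obtain a b where pab: "p = (a, b)" by (cases p)
    have p: "a \<noteq> {}" "b \<noteq> {}" "a \<subseteq> V" "b \<subseteq> V" "a \<times> b \<subseteq> E"
      using that unfolding box_complex_def pab by auto
    let ?A = "(\<lambda>x. (1::nat, x)) ` a" and ?B = "(\<lambda>x. (2::nat, x)) ` b"
    have "?A \<noteq> {}" "?B \<noteq> {}" "?A \<subseteq> K2_verts V" "?B \<subseteq> K2_verts V" "?A \<times> ?B \<subseteq> K2_edges E"
      using p unfolding K2_verts_def K2_edges_def by auto
    moreover have "Phi p = {?A, ?B}" unfolding Phi_def pab by simp
    ultimately show ?thesis unfolding B0_def by blast
  qed
  have bij: "bij_betw Phi (box_complex V E) (B0 (K2_verts V) (K2_edges E))"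
    unfolding bij_betw_def using inj into surj_part[OF assms] by blast
  have ord: "box_le p q \<longleftrightarrow> B0_le (Phi p) (Phi q)" if "p \<in> box_complex V E" "q \<in> box_complex V E" for p q
  proof -
    obtain a b where p0: "p = (a, b)" by (cases p)
    have p: "p = (a, b)" "a \<noteq> {}" "b \<noteq> {}"
      using that(1) unfolding box_complex_def p0 by auto
    obtain c d where q0: "q = (c, d)" by (cases q)
    have q: "q = (c, d)" "c \<noteq> {}" "d \<noteq> {}"
      using that(2) unfolding box_complex_def q0 by auto
    have 1: "(\<lambda>x. (1::nat, x)) ` a \<subseteq> (\<lambda>x. (2::nat, x)) ` d \<longleftrightarrow> False" using p by auto
    have 2: "(\<lambda>x. (2::nat, x)) ` b \<subseteq> (\<lambda>x. (1::nat, x)) ` c \<longleftrightarrow> False" using p by auto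
    have 3: "(\<lambda>x. (1::nat, x)) ` a \<subseteq> (\<lambda>x. (1::nat, x)) ` c \<longleftrightarrow> a \<subseteq> c" by auto
    have 4: "(\<lambda>x. (2::nat, x)) ` b \<subseteq> (\<lambda>x. (2::nat, x)) ` d \<longleftrightarrow> b \<subseteq> d" by auto
    show ?thesis unfolding box_le_def B0_le_def Phi_def p(1) q(1) using 1 2 3 4 by auto
  qed
  have inv: "Phi (box_inv p) = B0_map K2_flip (Phi p)" for p
  proof -
    have a: "K2_flip ` (\<lambda>x. (1::nat, x)) ` fst p = (\<lambda>x. (2::nat, x)) ` fst p"
      by (auto simp: K2_flip_def image_image)
    have b: "K2_flip ` (\<lambda>x. (2::nat, x)) ` snd p = (\<lambda>x. (1::nat, x)) ` snd p"
      by (auto simp: K2_flip_def image_image)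
    show ?thesis unfolding Phi_def B0_map_def box_inv_def using a b by (auto simp: insert_commute)
  qed
  have nat: "Phi (box_map f p) = B0_map (K2_map f) (Phi p)" for f :: "'a \<Rightarrow> 'b" and p
    unfolding Phi_def B0_map_def box_map_def K2_map_def by (simp add: image_image)
  show ?thesis using bij ord inv nat by blast
qed

end
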